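(* Let $q$ be a prime power, $\beta$ a primitive element of $\mathbb{F}_{q^2}$, $\bar{\alpha}=\alpha^q$, $\mathrm{Tr}(x)=x+x^q$, and let $\Psi:\mathbb{F}_{q^2}^n\to\mathbb{F}_q^{2n}$ be given by $\Psi(\alpha_0,\ldots,\alpha_{n-1})=\left(\mathrm{Tr}(\beta\alpha_0),\ldots,\mathrm{Tr}(\beta\alpha_{n-1}),\mathrm{Tr}(\bar{\beta}\alpha_0),\ldots,\mathrm{Tr}(\bar{\beta}\alpha_{n-1})\right)$. Let $T:\mathbb{F}_{q^2}^n\to\mathbb{F}_{q^2}^n$ be the conjucyclic shift $T(c_0,\ldots,c_{n-1})=(\bar{c}_{n-1},c_0,\ldots,c_{n-2})$ and $\sigma:\mathbb{F}_q^{2n}\to\mathbb{F}_q^{2n}$ the cyclic shift $\sigma(v_0,\ldots,v_{2n-1})=(v_{2n-1},v_0,\ldots,v_{2n-2})$. Then for every $\vec{\alpha}\in\mathbb{F}_{q^2}^n$, $\Psi(T(\vec{\alpha}))=\sigma(\Psi(\vec{\alpha}))$. *)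

theory Defs
  imports "HOL-Number_Theory.Number_Theory"
begin

text \<open>Elements of the field F_{q^2} are modelled by a finite field type 'a with
  CARD('a) = q^2; F_q is its subfield of elements fixed by x \<mapsto> x^q.\<close>

definition conjq :: "nat \<Rightarrow> 'a::field \<Rightarrow> 'a" where
  "conjq q x = x ^ q"

definition trq :: "nat \<Rightarrow> 'a::field \<Rightarrow> 'a" where
  "trq q x = x + x ^ q"

definition primitive_element :: "'a::{field,finite} \<Rightarrow> bool" where
  "primitive_element b \<longleftrightarrow> b \<noteq> 0 \<and> (\<forall>x. x \<noteq> 0 \<longrightarrow> (\<exists>k::nat. x = b ^ k))"

definition Psi :: "nat \<Rightarrow> 'a::field \<Rightarrow> 'a list \<Rightarrow> 'a list" where
  "Psi q b as = map (\<lambda>a. trq q (b * a)) as @ map (\<lambda>a. trq q (conjq q b * a)) as"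

definition conj_shift :: "nat \<Rightarrow> 'a::field list \<Rightarrow> 'a list" where
  "conj_shift q c = conjq q (last c) # butlast c"

definition cyc_shift :: "'a list \<Rightarrow> 'a list" where
  "cyc_shift v = last v # butlast v"

end

theory Submission
  imports Defs
begin

lemma fin_field_pow_card_minus1:
  fixes x :: "'a::{field,finite}"
  assumes "x \<noteq> 0"
  shows "x ^ (card (UNIV::'a set) - 1) = 1"
proof -
  let ?S = "UNIV - {0::'a}"
  have inj: "inj_on (\<lambda>y. x * y) ?S" using assms by (auto simp: inj_on_def)
  have img: "(\<lambda>y. x * y) ` ?S = ?S"
  proof
    show "(\<lambda>y. x * y) ` ?S \<subseteq> ?S" using assms by auto
    show "?S \<subseteq> (\<lambda>y. x * y) ` ?S"
    proof
      fix z assume "z \<in> ?S"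
      then have "z = x * (z / x)" "z / x \<in> ?S" using assms by auto
      then show "z \<in> (\<lambda>y. x * y) ` ?S" by blast
    qed
  qed
  have "prod id ?S = prod (\<lambda>y. x * y) ?S"
    using prod.reindex[OF inj, of id] img by simp
  also have "\<dots> = x ^ card ?S * prod id ?S"
    by (simp add: prod.distrib)
  finally have "x ^ card ?S * prod id ?S = 1 * prod id ?S" by simp
  moreover have "prod id ?S \<noteq> 0" by simp
  ultimately have "x ^ card ?S = 1" by simp
  moreover have "card ?S = card (UNIV::'a set) - 1" by (simp add: card_Diff_singleton)
  ultimately show ?thesis by simp
qed

lemma fin_field_pow_card:
  fixes x :: "'a::{field,finite}"
  shows "x ^ card (UNIV::'a set) = x"
proof (cases "x = 0")
  case True then show ?thesis using finite_UNIV_card_ge_0[where 'a='a] by simp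
next
  case False
  have "card (UNIV::'a set) = Suc (card (UNIV::'a set) - 1)" using finite_UNIV_card_ge_0[where 'a='a] by simp
  then have "x ^ card (UNIV::'a set) = x * x ^ (card (UNIV::'a set) - 1)" by (metis power_Suc)
  then show ?thesis using fin_field_pow_card_minus1[OF False] by simp
qed

theorem proposition3p5:
  fixes q n :: nat and \<beta> :: "'a::{field,finite}" and \<alpha> :: "'a list"
  assumes "primepow q"
    and "card (UNIV :: 'a set) = q ^ 2"
    and "primitive_element \<beta>"
    and "n \<ge> 1"
    and "length \<alpha> = n"
  shows "Psi q \<beta> (conj_shift q \<alpha>) = cyc_shift (Psi q \<beta> \<alpha>)"
proof -
  have qq: "\<And>x::'a. (x ^ q) ^ q = x"
    using fin_field_pow_card assms(2) by (metis power_mult power2_eq_square)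
  have A: "\<And>x::'a. (\<beta> * x) ^ q = \<beta> ^ q * x ^ q" by (simp add: power_mult_distrib)
  have B: "\<And>x::'a. (\<beta> ^ q * x) ^ q = \<beta> * x ^ q" using qq by (simp add: power_mult_distrib)
  have C: "\<And>x::'a. (\<beta> * x ^ q) ^ q = \<beta> ^ q * x" using qq by (simp add: power_mult_distrib)
  have D: "\<And>x::'a. (\<beta> ^ q * x ^ q) ^ q = \<beta> * x" using qq by (simp add: power_mult_distrib)
  obtain xs a where al: "\<alpha> = xs @ [a]"
    using assms(4,5) by (metis One_nat_def list.size(3) not_one_le_zero rev_exhaust)
  show ?thesis
    unfolding al Psi_def conj_shift_def cyc_shift_def trq_def conjq_def
    by (simp add: butlast_append A B C D qq algebra_simps)
qed

end
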